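(* Let $m \geq 0$ and $n \geq 1$ be integers and let $c = (c^t; c^b) = (c^t_1, \ldots, c^t_m; c^b_1, \ldots, c^b_n)$ be a stable configuration on $K_{m,n}^0$. For $j \in \{1, \ldots, n\}$, define $k_j := \left|\{ i \in \{1,\ldots,m\} : c^t_i < j \}\right|$, and let $(\tilde{c}^b_1, \ldots, \tilde{c}^b_n)$ be the non-decreasing rearrangement of $(c^b_1, \ldots, c^b_n)$. Then $c$ is stochastically recurrent if and only if $$\text{for all } j \in \{1,\ldots,n\}: \quad \tilde{c}^b_1 + \cdots + \tilde{c}^b_j \geq k_1 + \cdots + k_j.$$ Moreover, if $c$ is stochastically recurrent, then $\mathrm{level}(c) = c^b_1 + \cdots + c^b_n - (k_1 + \cdots + k_n)$.
   Context: $K_{m,n}^0$ is the complete bipartite graph with "top" vertices $v^t_0, v^t_1, \ldots, v^t_m$ and "bottom" vertices $v^b_1, \ldots, v^b_n$, with an edge between every top vertex and every bottom vertex; $v^t_0$ is called the sink. A configuration is a vector $c = (c^t_1, \ldots, c^t_m; c^b_1, \ldots, c^b_n)$ of non-negative integers ($c^*_i$ = number of grains at the non-sink vertex $v^*_i$). A non-sink vertex is stable if its number of grains is less than its degree, i.e. $c^t_i < n$, resp. $c^b_j < m+1$; $c$ is stable if all non-sink vertices are stable. Stochastic sandpile model (SSM) with a fixed parameter $p \in (0,1)$: an unstable vertex topples as follows: for each of its neighbours (for a bottom vertex this includes the sink $v^t_0$), independently (and independently of all previous topplings), with probability $p$ it sends one grain to that neighbour, and otherwise keeps that grain; grains sent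 to the sink disappear. Starting from any configuration and repeatedly toppling unstable vertices, one reaches a (random) stable configuration whose law does not depend on the toppling order. Consider the Markov chain on stable configurations which at each step adds a grain to a non-sink vertex chosen uniformly at random and then stabilises according to the SSM. A stable configuration is stochastically recurrent if it is a recurrent state of this Markov chain (appears infinitely often in its long-time running). The level of a configuration is $\mathrm{level}(c) := \sum_{i=1}^m c^t_i + \sum_{j=1}^n c^b_j - mn$. *)

theory Defs
  imports Complex_Main
begin

text \<open>Configurations on K_{m,n}^0: a pair (ct, cb) of functions, where ct i is the number
of grains on top vertex v^t_i (i in 1..m) and cb j the number on bottom vertex v^b_j (j in 1..n).
The top index 0 is the sink.\<close>

type_synonym config = "(nat \<Rightarrow> nat) \<times> (nat \<Rightarrow> nat)"

definition config_wf :: "nat \<Rightarrow> nat \<Rightarrow> config \<Rightarrow> bool" where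
  "config_wf m n c \<longleftrightarrow> (\<forall>i. i \<notin> {1..m} \<longrightarrow> fst c i = 0) \<and> (\<forall>j. j \<notin> {1..n} \<longrightarrow> snd c j = 0)"

definition stable :: "nat \<Rightarrow> nat \<Rightarrow> config \<Rightarrow> bool" where
  "stable m n c \<longleftrightarrow> (\<forall>i\<in>{1..m}. fst c i < n) \<and> (\<forall>j\<in>{1..n}. snd c j < m + 1)"

text \<open>Probability that a toppling vertex of degree d sends grains exactly along a given set of
S of its edges (each edge independently with probability p).\<close>

definition topple_prob :: "real \<Rightarrow> nat \<Rightarrow> nat \<Rightarrow> real" where
  "topple_prob p d s = p ^ s * (1 - p) ^ (d - s)"

text \<open>One SSM toppling of an unstable non-sink vertex, with the set S of neighbours that
receive a grain; only outcomes of positive probability are allowed. Grains sent to the sink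
(top index 0) disappear.\<close>

inductive ssm_topple :: "real \<Rightarrow> nat \<Rightarrow> nat \<Rightarrow> config \<Rightarrow> config \<Rightarrow> bool"
  for p :: real and m n :: nat where
  top: "\<lbrakk> i \<in> {1..m}; ct i \<ge> n; S \<subseteq> {1..n}; topple_prob p n (card S) > 0 \<rbrakk> \<Longrightarrow>
        ssm_topple p m n (ct, cb)
          (ct(i := ct i - card S), \<lambda>j. cb j + (if j \<in> S then 1 else 0))"
| bot: "\<lbrakk> j \<in> {1..n}; cb j \<ge> m + 1; S \<subseteq> {0..m}; topple_prob p (m + 1) (card S) > 0 \<rbrakk> \<Longrightarrow>
        ssm_topple p m n (ct, cb)
          (\<lambda>i. ct i + (if i \<in> S \<and> i \<noteq> 0 then 1 else 0), cb(j := cb j - card S))"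

definition add_top :: "nat \<Rightarrow> config \<Rightarrow> config" where
  "add_top i c = ((fst c)(i := fst c i + 1), snd c)"

definition add_bot :: "nat \<Rightarrow> config \<Rightarrow> config" where
  "add_bot j c = (fst c, (snd c)(j := snd c j + 1))"

text \<open>Positive-probability transitions of the Markov chain on stable configurations:
add a grain at a non-sink vertex, then stabilise (some finite sequence of topplings of unstable
vertices ending in a stable configuration).\<close>

definition chain_step :: "real \<Rightarrow> nat \<Rightarrow> nat \<Rightarrow> config \<Rightarrow> config \<Rightarrow> bool" where
  "chain_step p m n c d \<longleftrightarrow> stable m n c \<and> stable m n d \<and>
     ((\<exists>i\<in>{1..m}. (ssm_topple p m n)\<^sup>*\<^sup>* (add_top i c) d) \<or>
      (\<exists>j\<in>{1..n}. (ssm_topple p m n)\<^sup>*\<^sup>* (add_bot j c) d))"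

text \<open>Recurrence in the (finite) Markov chain: every state reachable from c can reach c back.\<close>

definition stoch_recurrent :: "real \<Rightarrow> nat \<Rightarrow> nat \<Rightarrow> config \<Rightarrow> bool" where
  "stoch_recurrent p m n c \<longleftrightarrow> stable m n c \<and>
     (\<forall>d. (chain_step p m n)\<^sup>*\<^sup>* c d \<longrightarrow> (chain_step p m n)\<^sup>*\<^sup>* d c)"

definition level :: "nat \<Rightarrow> nat \<Rightarrow> config \<Rightarrow> int" where
  "level m n c = int (\<Sum>i=1..m. fst c i) + int (\<Sum>j=1..n. snd c j) - int (m * n)"

definition kcount :: "nat \<Rightarrow> config \<Rightarrow> nat \<Rightarrow> nat" where
  "kcount m c j = card {i \<in> {1..m}. fst c i < j}"

definition sorted_bottom :: "nat \<Rightarrow> config \<Rightarrow> nat list" where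
  "sorted_bottom n c = sort (map (snd c) [1..<n+1])"

end

theory Submission
  imports Defs "HOL-Library.Multiset"
begin
lemma take_sorted_le:
  fixes zs :: "nat list"
  assumes "sorted zs" "M \<subseteq># mset zs" "size M = k"
  shows "sum_list (take k zs) \<le> sum_mset M"
  using assms
proof (induction zs arbitrary: M k)
  case Nil
  then show ?case by simp
next
  case (Cons z zs)
  show ?case
  proof (cases k)
    case 0
    then show ?thesis by simp
  next
    case (Suc k')
    show ?thesis
    proof (cases "z \<in># M")
      case True
      define M' where "M' = M - {#z#}"
      have M': "M = add_mset z M'" unfolding M'_def using True by (simp add: insert_DiffM)
      have "M' \<subseteq># mset zs" using Cons.prems M' by simp
      moreover have "size M' = k'" using Cons.prems M' Suc by simp
      ultimately have "sum_list (take k' zs) \<le> sum_mset M'"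
        using Cons.IH Cons.prems(1) by simp
      then show ?thesis using M' Suc by simp
    next
      case False
      have sub: "M \<subseteq># mset zs"
        unfolding subseteq_mset_def
      proof
        fix x
        have "count M x \<le> count (mset (z # zs)) x" using Cons.prems(2) by (simp add: subseteq_mset_def)
        then show "count M x \<le> count (mset zs) x" using False
          by (cases "x = z") (auto simp: not_in_iff)
      qed
      have ih: "sum_list (take k zs) \<le> sum_mset M"
        using Cons.IH Cons.prems sub by simp
      have "k \<le> length zs" using size_mset_mono[OF sub] Cons.prems(3) by simp
      hence kl: "k' < length zs" using Suc by simp
      have "take k zs = take k' zs @ [zs ! k']" using kl Suc by (simp add: take_Suc_conv_app_nth)
      moreover have "z \<le> zs ! k'" using Cons.prems(1) kl by (simp add: nth_mem)
      ultimately have "sum_list (take k (z # zs)) \<le> sum_list (take k zs)" using Suc by simp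
      then show ?thesis using ih by simp
    qed
  qed
qed

lemma sort_map_eq: "sort (map f xs) = map f (sort_key f xs)"
proof -
  have "mset (map f (sort_key f xs)) = mset (map f xs)"
    by (metis mset_map mset_sort)
  then show ?thesis by (metis properties_for_sort sorted_sort_key)
qed

lemma prefix_exists:
  assumes "distinct xs" "k \<le> length xs"
  shows "\<exists>J. J \<subseteq> set xs \<and> card J = k \<and> sum f J = sum_list (take k (sort (map f xs)))"
proof -
  let ?ys = "sort_key f xs"
  have d: "distinct (take k ?ys)" using assms by simp
  show ?thesis
  proof (intro exI conjI)
    show "set (take k ?ys) \<subseteq> set xs" by (metis set_sort set_take_subset)
    show "card (set (take k ?ys)) = k" using d assms by (simp add: distinct_card)
    show "sum f (set (take k ?ys)) = sum_list (take k (sort (map f xs)))"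
      using d by (simp add: sort_map_eq take_map sum_list_distinct_conv_sum_set)
  qed
qed

lemma prefix_min:
  assumes "distinct xs" "J \<subseteq> set xs"
  shows "sum_list (take (card J) (sort (map (f::_\<Rightarrow>nat) xs))) \<le> sum f J"
proof -
  have fin: "finite J" using assms finite_subset by blast
  have "mset_set J \<subseteq># mset_set (set xs)" using assms fin by simp
  hence "mset_set J \<subseteq># mset xs" using assms by (simp add: mset_set_set)
  hence "image_mset f (mset_set J) \<subseteq># mset (sort (map f xs))"
    by (simp add: image_mset_subseteq_mono)
  moreover have "size (image_mset f (mset_set J)) = card J" by simp
  ultimately have "sum_list (take (card J) (sort (map f xs))) \<le> sum_mset (image_mset f (mset_set J))"
    using take_sorted_le by (metis sorted_sort)
  then show ?thesis by (simp add: sum_unfold_sum_mset)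
qed

lemma topk_exists:
  fixes a :: "'a \<Rightarrow> nat"
  assumes "finite I" "k \<le> card I"
  shows "\<exists>A. A \<subseteq> I \<and> card A = k \<and> (\<forall>x\<in>A. \<forall>y\<in>I - A. a y \<le> a x)"
  using assms(2)
proof (induction k)
  case 0
  then show ?case by (intro exI[of _ "{}"]) simp
next
  case (Suc k)
  then obtain A where A: "A \<subseteq> I" "card A = k" "\<forall>x\<in>A. \<forall>y\<in>I - A. a y \<le> a x" by auto
  have finA: "finite A" using A(1) assms(1) finite_subset by blast
  have "card (I - A) > 0" using Suc.prems A finA assms(1) by (simp add: card_Diff_subset)
  hence ne: "I - A \<noteq> {}" "finite (I - A)" using assms(1) by (metis card.empty less_irrefl, simp)
  have "Max (a ` (I - A)) \<in> a ` (I - A)" using Max_in[of "a ` (I - A)"] ne by auto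
  then obtain x where x: "x \<in> I - A" "a x = Max (a ` (I - A))" by (metis imageE)
  have xmax: "\<forall>y\<in>I - A. a y \<le> a x" using x ne by simp
  show ?case
  proof (intro exI[of _ "insert x A"] conjI)
    show "insert x A \<subseteq> I" using x A by auto
    show "card (insert x A) = Suc k" using x A finA by simp
    show "\<forall>z\<in>insert x A. \<forall>y\<in>I - insert x A. a y \<le> a z"
      using xmax A(3) by auto
  qed
qed

lemma GR:
  fixes a :: "'a \<Rightarrow> nat" and b :: "'b \<Rightarrow> nat"
  assumes "finite I" "finite C"
    and "\<forall>J\<subseteq>C. (\<Sum>i\<in>I. a i + card J - card C) \<le> sum b J"
  shows "\<exists>E\<subseteq>I \<times> C. (\<forall>i\<in>I. a i \<le> card {j. (i,j)\<in>E}) \<and> (\<forall>j\<in>C. card {i. (i,j)\<in>E} \<le> b j)"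
  using assms(2,3)
proof (induction C arbitrary: a rule: finite_induct)
  case empty
  have "(\<Sum>i\<in>I. a i) \<le> 0" using empty.prems[rule_format, of "{}"] by simp
  hence "\<forall>i\<in>I. a i = 0" using assms(1) by simp
  then show ?case by (intro exI[of _ "{}"]) simp
next
  case (insert j0 C)
  define N where "N = card C"
  have cardC: "card (insert j0 C) = Suc N" using insert N_def by simp
  obtain A where A: "A \<subseteq> I" "card A = min (b j0) (card I)" "\<forall>x\<in>A. \<forall>y\<in>I - A. a y \<le> a x"
    using topk_exists[OF assms(1), of "min (b j0) (card I)" a] by auto
  define a' where "a' i = a i - (if i \<in> A then 1 else 0)" for i
  have cond': "\<forall>J\<subseteq>C. (\<Sum>i\<in>I. a' i + card J - card C) \<le> sum b J"
  proof (intro allI impI)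
    fix J assume J: "J \<subseteq> C"
    define s where "s = card J"
    have finJ: "finite J" using J insert.hyps(1) finite_subset by blast
    have sN: "s \<le> N" using J insert.hyps(1) N_def s_def card_mono by blast
    have j0J: "j0 \<notin> J" using J insert.hyps(2) by blast
    have condJ: "(\<Sum>i\<in>I. a i + s - Suc N) \<le> sum b J"
      using insert.prems[rule_format, of J] J cardC s_def by auto
    have condJ0: "(\<Sum>i\<in>I. a i + Suc s - Suc N) \<le> sum b J + b j0"
      using insert.prems[rule_format, of "insert j0 J"] J cardC s_def finJ j0J by (auto simp: add.commute)
    have eqA: "\<And>i. i \<in> A \<Longrightarrow> a' i + s - N = a i + s - Suc N"
      using sN unfolding a'_def by auto
    have eqnA: "\<And>i. i \<notin> A \<Longrightarrow> a' i + s - N = a i + Suc s - Suc N"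
      unfolding a'_def by auto
    have split: "(\<Sum>i\<in>I. a' i + s - N) = (\<Sum>i\<in>A. a i + s - Suc N) + (\<Sum>i\<in>I - A. a i + Suc s - Suc N)"
    proof -
      have "(\<Sum>i\<in>I. a' i + s - N) = (\<Sum>i\<in>A. a' i + s - N) + (\<Sum>i\<in>I - A. a' i + s - N)"
        using A(1) assms(1) by (metis sum.subset_diff add.commute)
      also have "\<dots> = (\<Sum>i\<in>A. a i + s - Suc N) + (\<Sum>i\<in>I - A. a i + Suc s - Suc N)"
        using eqA eqnA by (metis (no_types, lifting) DiffD2 sum.cong)
      finally show ?thesis .
    qed
    have splitJ: "(\<Sum>i\<in>I. a i + s - Suc N) = (\<Sum>i\<in>A. a i + s - Suc N) + (\<Sum>i\<in>I - A. a i + s - Suc N)"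
      using A(1) assms(1) by (metis sum.subset_diff add.commute)
    have splitJ0: "(\<Sum>i\<in>I. a i + Suc s - Suc N) = (\<Sum>i\<in>A. a i + Suc s - Suc N) + (\<Sum>i\<in>I - A. a i + Suc s - Suc N)"
      using A(1) assms(1) by (metis sum.subset_diff add.commute)
    have goal: "(\<Sum>i\<in>I. a' i + s - N) \<le> sum b J"
    proof (cases "A = I")
      case True
      then show ?thesis using split condJ by simp
    next
      case False
      hence cA: "card A = b j0"
        using A assms(1) by (metis card_subset_eq min_def)
      show ?thesis
      proof (cases "\<exists>i\<in>A. a i + s < Suc N")
        case True
        then obtain i0 where i0: "i0 \<in> A" "a i0 + s < Suc N" by auto
        have "\<forall>y\<in>I - A. a y + Suc s - Suc N = a y + s - Suc N"
        proof
          fix y assume "y \<in> I - A"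
          hence "a y \<le> a i0" using A(3) i0(1) by blast
          thus "a y + Suc s - Suc N = a y + s - Suc N" using i0(2) by simp
        qed
        hence "(\<Sum>i\<in>I - A. a i + Suc s - Suc N) = (\<Sum>i\<in>I - A. a i + s - Suc N)"
          by simp
        then show ?thesis using split splitJ condJ by simp
      next
        case False
        hence "\<forall>i\<in>A. a i + Suc s - Suc N = Suc (a i + s - Suc N)" by auto
        then have "(\<Sum>i\<in>A. a i + Suc s - Suc N) = (\<Sum>i\<in>A. a i + s - Suc N) + card A"
        proof -
          assume h: "\<forall>i\<in>A. a i + Suc s - Suc N = Suc (a i + s - Suc N)"
          have "(\<Sum>i\<in>A. a i + Suc s - Suc N) = (\<Sum>i\<in>A. Suc (a i + s - Suc N))"
            using h by (intro sum.cong) auto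
          also have "\<dots> = (\<Sum>i\<in>A. a i + s - Suc N) + card A" by (simp add: sum_Suc)
          finally show ?thesis .
        qed
        then show ?thesis using split splitJ0 condJ0 cA by simp
      qed
    qed
    then show "(\<Sum>i\<in>I. a' i + card J - card C) \<le> sum b J"
      using s_def N_def by simp
  qed
  obtain E' where E': "E' \<subseteq> I \<times> C" "\<forall>i\<in>I. a' i \<le> card {j. (i,j)\<in>E'}"
    "\<forall>j\<in>C. card {i. (i,j)\<in>E'} \<le> b j"
    using insert.IH[OF cond'] by blast
  define E where "E = E' \<union> A \<times> {j0}"
  show ?case
  proof (intro exI[of _ E] conjI ballI)
    show "E \<subseteq> I \<times> insert j0 C" using E' A unfolding E_def by auto
  next
    fix i assume i: "i \<in> I"
    have fr: "finite {j. (i,j)\<in>E'}"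
      using E'(1) insert.hyps(1) by (rule_tac finite_subset[of _ C]) auto
    have j0n: "j0 \<notin> {j. (i,j)\<in>E'}" using E'(1) insert.hyps(2) by auto
    show "a i \<le> card {j. (i,j)\<in>E}"
    proof (cases "i \<in> A")
      case True
      hence "{j. (i,j)\<in>E} = insert j0 {j. (i,j)\<in>E'}" unfolding E_def by auto
      hence "card {j. (i,j)\<in>E} = Suc (card {j. (i,j)\<in>E'})" using fr j0n by simp
      then show ?thesis using E'(2) i True unfolding a'_def by force
    next
      case False
      hence "{j. (i,j)\<in>E} = {j. (i,j)\<in>E'}" unfolding E_def by auto
      then show ?thesis using E'(2) i False unfolding a'_def by force
    qed
  next
    fix j assume j: "j \<in> insert j0 C"
    show "card {i. (i,j)\<in>E} \<le> b j"
    proof (cases "j = j0")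
      case True
      have "{i. (i,j)\<in>E} = A" using E'(1) insert.hyps(2) True unfolding E_def by auto
      then show ?thesis using A(2) True by simp
    next
      case False
      hence "{i. (i,j)\<in>E} = {i. (i,j)\<in>E'}" unfolding E_def by auto
      then show ?thesis using E'(3) j False by simp
    qed
  qed
qed

lemma tp_pos: "0 < p \<Longrightarrow> p < 1 \<Longrightarrow> topple_prob p d s > 0"
  unfolding topple_prob_def by simp

definition orient :: "nat \<Rightarrow> nat \<Rightarrow> config \<Rightarrow> (nat \<times> nat) set \<Rightarrow> bool" where
  "orient m n c E \<longleftrightarrow> E \<subseteq> {1..m} \<times> {1..n} \<and>
     (\<forall>i\<in>{1..m}. n \<le> card {j. (i,j)\<in>E} + fst c i) \<and>
     (\<forall>j\<in>{1..n}. card {i. (i,j)\<in>E} \<le> snd c j)"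

definition OR :: "nat \<Rightarrow> nat \<Rightarrow> config \<Rightarrow> bool" where
  "OR m n c \<longleftrightarrow> (\<exists>E. orient m n c E)"

lemma fin_row: "E \<subseteq> {1..m::nat} \<times> {1..n::nat} \<Longrightarrow> finite {j. (i,j)\<in>E}"
  by (rule finite_subset[of _ "{1..n}"]) auto

lemma fin_col: "E \<subseteq> {1..m::nat} \<times> {1..n::nat} \<Longrightarrow> finite {i. (i,j)\<in>E}"
  by (rule finite_subset[of _ "{1..m}"]) auto

lemma OR_mono:
  assumes "OR m n c" "\<forall>i. fst c i \<le> fst d i" "\<forall>j. snd c j \<le> snd d j"
  shows "OR m n d"
  using assms unfolding OR_def orient_def by (meson le_trans add_le_mono order_refl)

lemma OR_topple:
  assumes "ssm_topple p m n c d" "OR m n c"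
  shows "OR m n d"
  using assms(1)
proof cases
  case (top i ct S cb)
  from assms(2) obtain E where E: "orient m n c E" unfolding OR_def by blast
  define E' where "E' = {x\<in>E. fst x \<noteq> i} \<union> {i} \<times> S"
  have Ebox: "E \<subseteq> {1..m} \<times> {1..n}" using E unfolding orient_def by blast
  have "orient m n d E'"
    unfolding orient_def
  proof (intro conjI ballI)
    show "E' \<subseteq> {1..m} \<times> {1..n}" using Ebox top unfolding E'_def by auto
  next
    fix i' assume i': "i' \<in> {1..m}"
    show "n \<le> card {j. (i',j)\<in>E'} + fst d i'"
    proof (cases "i' = i")
      case True
      have "{j. (i',j)\<in>E'} = S" unfolding E'_def using True by auto
      moreover have "card S \<le> n" using top(5) by (metis card_atLeastAtMost card_mono diff_Suc_1 finite_atLeastAtMost)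
      ultimately show ?thesis using top True by simp
    next
      case False
      have "{j. (i',j)\<in>E'} = {j. (i',j)\<in>E}" unfolding E'_def using False by auto
      then show ?thesis using E i' False top unfolding orient_def by simp
    qed
  next
    fix j assume j: "j \<in> {1..n}"
    have sub: "{i'. (i',j)\<in>E'} \<subseteq> (if j \<in> S then insert i {i'. (i',j)\<in>E} else {i'. (i',j)\<in>E})"
      unfolding E'_def by auto
    have fc: "finite {i'. (i',j)\<in>E}" using fin_col[OF Ebox] .
    have "card {i'. (i',j)\<in>E'} \<le> card (if j \<in> S then insert i {i'. (i',j)\<in>E} else {i'. (i',j)\<in>E})"
      using sub fc by (intro card_mono) auto
    also have "\<dots> \<le> card {i'. (i',j)\<in>E} + (if j \<in> S then 1 else 0)"
      using fc by (auto simp: card_insert_if)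
    also have "\<dots> \<le> snd d j" using E j top unfolding orient_def by auto
    finally show "card {i'. (i',j)\<in>E'} \<le> snd d j" .
  qed
  then show ?thesis unfolding OR_def by blast
next
  case (bot j cb S ct)
  from assms(2) obtain E where E: "orient m n c E" unfolding OR_def by blast
  define E' where "E' = {x\<in>E. snd x \<noteq> j} \<union> ({1..m} - S) \<times> {j}"
  have Ebox: "E \<subseteq> {1..m} \<times> {1..n}" using E unfolding orient_def by blast
  have "orient m n d E'"
    unfolding orient_def
  proof (intro conjI ballI)
    show "E' \<subseteq> {1..m} \<times> {1..n}" using Ebox bot unfolding E'_def by auto
  next
    fix i assume i: "i \<in> {1..m}"
    have fr: "finite {j'. (i,j')\<in>E}" using fin_row[OF Ebox] .
    have old: "n \<le> card {j'. (i,j')\<in>E} + ct i" using E i bot unfolding orient_def by auto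
    show "n \<le> card {j'. (i,j')\<in>E'} + fst d i"
    proof (cases "i \<in> S")
      case True
      have "{j'. (i,j')\<in>E'} = {j'. (i,j')\<in>E} - {j}" unfolding E'_def using True by auto
      hence "card {j'. (i,j')\<in>E} \<le> card {j'. (i,j')\<in>E'} + 1"
        using diff_card_le_card_Diff[of "{j}" "{j'. (i,j')\<in>E}"] by simp
      moreover have "fst d i = ct i + 1" using bot True i by simp
      ultimately show ?thesis using old by simp
    next
      case False
      have "{j'. (i,j')\<in>E} \<subseteq> {j'. (i,j')\<in>E'}" unfolding E'_def using False i by auto
      moreover have "finite {j'. (i,j')\<in>E'}" unfolding E'_def using fr by (rule_tac finite_subset[of _ "insert j {j'. (i,j')\<in>E}"]) auto
      ultimately have "card {j'. (i,j')\<in>E} \<le> card {j'. (i,j')\<in>E'}" by (rule card_mono[rotated])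
      moreover have "fst d i = ct i" using bot False by simp
      ultimately show ?thesis using old by simp
    qed
  next
    fix j' assume j': "j' \<in> {1..n}"
    show "card {i. (i,j')\<in>E'} \<le> snd d j'"
    proof (cases "j' = j")
      case True
      have "{i. (i,j')\<in>E'} = {1..m} - S" unfolding E'_def using True Ebox by auto
      moreover have "card ({1..m} - S) + card S \<le> m + 1"
      proof -
        have "S \<subseteq> insert 0 {1..m}" using bot by auto
        hence "card S \<le> card (insert 0 (S \<inter> {1..m}))"
          by (intro card_mono) auto
        also have "\<dots> \<le> card (S \<inter> {1..m}) + 1" by (simp add: card_insert_if)
        finally have "card S \<le> card (S \<inter> {1..m}) + 1" .
        moreover have "card ({1..m} - S) + card ({1..m} \<inter> S) = m"
          by (metis card_Diff_subset_Int card_atLeastAtMost diff_Suc_1 finite_atLeastAtMost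
               inf_le1 card_mono le_add_diff_inverse2 finite_Int)
        ultimately show ?thesis by (simp add: Int_commute)
      qed
      moreover have "snd d j' = cb j - card S" using bot True by simp
      moreover have "m + 1 \<le> cb j" using bot by simp
      ultimately show ?thesis by simp
    next
      case False
      have "{i. (i,j')\<in>E'} = {i. (i,j')\<in>E}" unfolding E'_def using False by auto
      then show ?thesis using E j' False bot unfolding orient_def by simp
    qed
  qed
  then show ?thesis unfolding OR_def by blast
qed

lemma OR_topples:
  assumes "(ssm_topple p m n)\<^sup>*\<^sup>* c d" "OR m n c"
  shows "OR m n d"
  using assms by (induction rule: rtranclp_induct) (auto intro: OR_topple)

lemma OR_chain:
  assumes "chain_step p m n c d" "OR m n c"
  shows "OR m n d"
proof -
  have a1: "\<And>i. OR m n (add_top i c)" using assms(2)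
    by (rule OR_mono) (auto simp: add_top_def)
  have a2: "\<And>j. OR m n (add_bot j c)" using assms(2)
    by (rule OR_mono) (auto simp: add_bot_def)
  show ?thesis using assms(1) a1 a2 OR_topples unfolding chain_step_def by blast
qed

lemma OR_chains:
  assumes "(chain_step p m n)\<^sup>*\<^sup>* c d" "OR m n c"
  shows "OR m n d"
  using assms by (induction rule: rtranclp_induct) (auto intro: OR_chain)

lemma tp_pos': "0 < p \<Longrightarrow> p < 1 \<Longrightarrow> topple_prob p d s > 0"
  unfolding topple_prob_def by simp

lemma wf_topple:
  assumes "ssm_topple p m n c d" "config_wf m n c"
  shows "config_wf m n d"
  using assms(1)
proof cases
  case (top i ct S cb)
  then show ?thesis using assms(2) unfolding config_wf_def by auto
next
  case (bot j cb S ct)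
  then show ?thesis using assms(2) unfolding config_wf_def by auto
qed

lemma wf_topples:
  assumes "(ssm_topple p m n)\<^sup>*\<^sup>* c d" "config_wf m n c"
  shows "config_wf m n d"
  using assms by (induction rule: rtranclp_induct) (auto intro: wf_topple)

lemma wf_chain:
  assumes "chain_step p m n c d" "config_wf m n c"
  shows "config_wf m n d"
proof -
  have "\<And>i. i \<in> {1..m} \<Longrightarrow> config_wf m n (add_top i c)" using assms(2)
    unfolding add_top_def config_wf_def by auto
  moreover have "\<And>j. j \<in> {1..n} \<Longrightarrow> config_wf m n (add_bot j c)" using assms(2)
    unfolding add_bot_def config_wf_def by auto
  ultimately show ?thesis using assms(1) wf_topples unfolding chain_step_def by blast
qed

lemma wf_chains:
  assumes "(chain_step p m n)\<^sup>*\<^sup>* c d" "config_wf m n c"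
  shows "config_wf m n d"
  using assms by (induction rule: rtranclp_induct) (auto intro: wf_chain)

lemma reach_mono:
  assumes "stable m n d" "stable m n d'" "config_wf m n d" "config_wf m n d'"
    "\<forall>i. fst d i \<le> fst d' i" "\<forall>j. snd d j \<le> snd d' j"
  shows "(chain_step p m n)\<^sup>*\<^sup>* d d'"
  using assms
proof (induction "(\<Sum>i=1..m. fst d' i - fst d i) + (\<Sum>j=1..n. snd d' j - snd d j)"
    arbitrary: d rule: less_induct)
  case less
  show ?case
  proof (cases "\<exists>i\<in>{1..m}. fst d i < fst d' i")
    case True
    then obtain i where i: "i \<in> {1..m}" "fst d i < fst d' i" by blast
    define d1 where "d1 = add_top i d"
    have s1: "stable m n d1" using less.prems(1,2) i unfolding d1_def add_top_def stable_def
      by (auto, metis fun_upd_other less_le_trans Suc_leI le_less_trans)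
    have w1: "config_wf m n d1" using less.prems(3) i unfolding d1_def add_top_def config_wf_def by auto
    have l1: "\<forall>i. fst d1 i \<le> fst d' i" "\<forall>j. snd d1 j \<le> snd d' j"
      using less.prems(5,6) i unfolding d1_def add_top_def by auto
    have step: "chain_step p m n d d1"
      unfolding chain_step_def using less.prems(1) s1 i d1_def by blast
    have "(\<Sum>i=1..m. fst d' i - fst d1 i) < (\<Sum>i=1..m. fst d' i - fst d i)"
      by (rule sum_strict_mono_ex1) (use i less.prems(5) in \<open>auto simp: d1_def add_top_def\<close>)
    moreover have "snd d1 = snd d" unfolding d1_def add_top_def by simp
    ultimately have "(chain_step p m n)\<^sup>*\<^sup>* d1 d'"
      using less.hyps[OF _ s1 less.prems(2) w1 less.prems(4) l1] by simp
    then show ?thesis using step by (meson converse_rtranclp_into_rtranclp)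
  next
    case False1: False
    show ?thesis
    proof (cases "\<exists>j\<in>{1..n}. snd d j < snd d' j")
      case True
      then obtain j where j: "j \<in> {1..n}" "snd d j < snd d' j" by blast
      define d1 where "d1 = add_bot j d"
      have "snd d' j < m + 1" using less.prems(2) j unfolding stable_def by blast
      hence "snd d j < m" using j(2) by simp
      hence s1: "stable m n d1" using less.prems(1,2) j unfolding d1_def add_bot_def stable_def
        by auto
      have w1: "config_wf m n d1" using less.prems(3) j unfolding d1_def add_bot_def config_wf_def by auto
      have l1: "\<forall>i. fst d1 i \<le> fst d' i" "\<forall>j. snd d1 j \<le> snd d' j"
        using less.prems(5,6) j unfolding d1_def add_bot_def by auto
      have step: "chain_step p m n d d1"
        unfolding chain_step_def using less.prems(1) s1 j d1_def by blast
      have "(\<Sum>j=1..n. snd d' j - snd d1 j) < (\<Sum>j=1..n. snd d' j - snd d j)"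
        by (rule sum_strict_mono_ex1) (use j less.prems(6) in \<open>auto simp: d1_def add_bot_def\<close>)
      moreover have "fst d1 = fst d" unfolding d1_def add_bot_def by simp
      ultimately have "(chain_step p m n)\<^sup>*\<^sup>* d1 d'"
        using less.hyps[OF _ s1 less.prems(2) w1 less.prems(4) l1] by simp
      then show ?thesis using step by (meson converse_rtranclp_into_rtranclp)
    next
      case False
      have "fst d = fst d'"
      proof
        fix i show "fst d i = fst d' i"
          using False1 less.prems(3,4,5) unfolding config_wf_def
          by (metis le_neq_implies_less)
      qed
      moreover have "snd d = snd d'"
      proof
        fix j show "snd d j = snd d' j"
          using False less.prems(3,4,6) unfolding config_wf_def
          by (metis le_neq_implies_less)
      qed
      ultimately have "d = d'" by (simp add: prod_eq_iff)
      then show ?thesis by simp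
    qed
  qed
qed

lemma ttop:
  assumes "0 < p" "p < 1" "i \<in> {1..m}" "n \<le> ct i" "S \<subseteq> {1..n}"
    "d = (ct(i := ct i - card S), \<lambda>j. cb j + (if j \<in> S then 1 else 0))"
  shows "ssm_topple p m n (ct, cb) d"
proof -
  have "ssm_topple p m n (ct, cb) (ct(i := ct i - card S), \<lambda>j. cb j + (if j \<in> S then 1 else 0))"
    by (rule ssm_topple.top) (use assms tp_pos' in auto)
  then show ?thesis using assms(6) by simp
qed

lemma tbot:
  assumes "0 < p" "p < 1" "j \<in> {1..n}" "m + 1 \<le> cb j" "S \<subseteq> {0..m}"
    "d = (\<lambda>i. ct i + (if i \<in> S \<and> i \<noteq> 0 then 1 else 0), cb(j := cb j - card S))"
  shows "ssm_topple p m n (ct, cb) d"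
proof -
  have "ssm_topple p m n (ct, cb) (\<lambda>i. ct i + (if i \<in> S \<and> i \<noteq> 0 then 1 else 0), cb(j := cb j - card S))"
    by (rule ssm_topple.bot) (use assms tp_pos' in auto)
  then show ?thesis using assms(6) by simp
qed

lemma bounce:
  assumes "0 < p" "p < 1" "j \<in> {1..n}" "m + 1 \<le> cb j"
  shows "ssm_topple p m n (ct, cb) (ct, cb(j := cb j - 1))"
  by (rule tbot[where S="{0}"]) (use assms in \<open>auto simp: fun_eq_iff\<close>)

lemma tops_bounce:
  assumes "0 < p" "p < 1" "1 \<le> n" "finite T" "T \<subseteq> {1..m}" "\<forall>i\<in>T. n \<le> ct i + 1" "cb n = m"
  shows "(ssm_topple p m n)\<^sup>*\<^sup>* (\<lambda>i. ct i + (if i \<in> T then 1 else 0), cb) (ct, cb)"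
  using assms(4-6)
proof (induction T rule: finite_induct)
  case empty
  then show ?case by simp
next
  case (insert x T)
  let ?c0 = "\<lambda>i. ct i + (if i \<in> insert x T then 1 else 0)"
  let ?c1 = "\<lambda>i. ct i + (if i \<in> T then 1 else 0)"
  have s1: "ssm_topple p m n (?c0, cb) (?c1, cb(n := m + 1))"
    by (rule ttop[where i=x and S="{n}"]) (use insert assms in \<open>auto simp: fun_eq_iff\<close>)
  have s2: "ssm_topple p m n (?c1, cb(n := m + 1)) (?c1, cb)"
    using bounce[OF assms(1,2), where j=n and cb="cb(n := m + 1)" and ct="?c1" and m=m and n=n] assms(3,7)
    by (simp add: fun_upd_idem)
  have "(ssm_topple p m n)\<^sup>*\<^sup>* (?c1, cb) (ct, cb)" using insert by simp
  then show ?case using s1 s2 by (meson converse_rtranclp_into_rtranclp)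
qed

definition cmax :: "nat \<Rightarrow> nat \<Rightarrow> config" where
  "cmax m n = (\<lambda>i. if i \<in> {1..m} then n - 1 else 0, \<lambda>j. if j \<in> {1..n} then m else 0)"

definition XA :: "nat \<Rightarrow> nat \<Rightarrow> nat set \<Rightarrow> config" where
  "XA m n P = (fst (cmax m n), \<lambda>j. if j \<in> P then 0 else snd (cmax m n) j)"

lemma cmax_stable: "1 \<le> n \<Longrightarrow> stable m n (cmax m n)"
  unfolding stable_def cmax_def by auto

lemma cmax_wf: "config_wf m n (cmax m n)"
  unfolding config_wf_def cmax_def by auto

lemma phaseA:
  assumes "0 < p" "p < 1" "1 \<le> n" "P \<subseteq> {1..n-1}"
  shows "(chain_step p m n)\<^sup>*\<^sup>* (cmax m n) (XA m n P)"
proof -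
  have fin: "finite P" using assms(4) finite_subset by blast
  show ?thesis using fin assms(4)
  proof (induction P rule: finite_induct)
    case empty
    then show ?case by (simp add: XA_def)
  next
    case (insert j P)
    have j: "j \<in> {1..n}" "j \<noteq> n" using insert by auto
    have stP: "\<And>P. stable m n (XA m n P)" using assms(3) unfolding stable_def XA_def cmax_def by auto
    let ?ct = "fst (cmax m n)"
    let ?cbP = "\<lambda>j. if j \<in> P then 0 else snd (cmax m n) j"
    let ?cbQ = "\<lambda>j'. if j' \<in> insert j P then 0 else snd (cmax m n) j'"
    have add: "add_bot j (XA m n P) = (?ct, ?cbP(j := m + 1))"
      unfolding add_bot_def XA_def using insert j by (simp add: cmax_def)
    have t1: "ssm_topple p m n (?ct, ?cbP(j := m + 1))
        (\<lambda>i. ?ct i + (if i \<in> {1..m} then 1 else 0), ?cbQ)"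
      by (rule tbot[where S="{0..m}"]) (use assms j in \<open>auto simp: fun_eq_iff\<close>)
    have t2: "(ssm_topple p m n)\<^sup>*\<^sup>* (\<lambda>i. ?ct i + (if i \<in> {1..m} then 1 else 0), ?cbQ) (?ct, ?cbQ)"
      by (rule tops_bounce[OF assms(1,2,3)]) (use insert assms(3) in \<open>auto simp: cmax_def\<close>)
    have xq: "XA m n (insert j P) = (?ct, ?cbQ)" by (simp add: XA_def)
    have "(ssm_topple p m n)\<^sup>*\<^sup>* (add_bot j (XA m n P)) (XA m n (insert j P))"
      unfolding add xq using converse_rtranclp_into_rtranclp[OF t1 t2] .
    hence "chain_step p m n (XA m n P) (XA m n (insert j P))"
      unfolding chain_step_def using stP j(1) by blast
    moreover have "(chain_step p m n)\<^sup>*\<^sup>* (cmax m n) (XA m n P)" using insert by simp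
    ultimately show ?case by (rule rtranclp.rtrancl_into_rtrancl[rotated])
  qed
qed

definition row :: "(nat \<times> nat) set \<Rightarrow> nat \<Rightarrow> nat set" where
  "row E i = {j. (i,j) \<in> E}"
definition col :: "(nat \<times> nat) set \<Rightarrow> nat \<Rightarrow> nat set" where
  "col E j = {i. (i,j) \<in> E}"

definition XB :: "nat \<Rightarrow> nat \<Rightarrow> (nat \<times> nat) set \<Rightarrow> nat set \<Rightarrow> config" where
  "XB m n E Q = (\<lambda>i. if i \<in> Q then n - card (insert n (row E i)) else if i \<in> {1..m} then n - 1 else 0,
                 \<lambda>j. if j \<in> {1..n-1} then card {i\<in>Q. j \<in> row E i} else if j = n then m else 0)"

lemma XA_XB: "1 \<le> n \<Longrightarrow> XA m n {1..n-1} = XB m n E {}"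
  unfolding XA_def XB_def cmax_def by (auto simp: fun_eq_iff)

lemma row_sub: "E \<subseteq> {1..m} \<times> {1..n} \<Longrightarrow> row E i \<subseteq> {1..n}"
  unfolding row_def by auto

lemma XB_stable:
  assumes "1 \<le> n" "Q \<subseteq> {1..m}" "E \<subseteq> {1..m} \<times> {1..n}"
  shows "stable m n (XB m n E Q)"
  unfolding stable_def
proof (intro conjI ballI)
  fix i assume "i \<in> {1..m}"
  have "finite (row E i)" using row_sub[OF assms(3)] finite_subset by blast
  hence "card (insert n (row E i)) > 0" by (simp add: card_gt_0_iff)
  then show "fst (XB m n E Q) i < n" using assms(1) unfolding XB_def by auto
next
  fix j assume "j \<in> {1..n}"
  have "card {i\<in>Q. j \<in> row E i} \<le> card {1..m}"
    using assms(2) by (intro card_mono) auto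
  then show "snd (XB m n E Q) j < m + 1" unfolding XB_def by auto
qed

lemma card_filter_insert:
  assumes "finite Q" "i \<notin> Q"
  shows "card {x\<in>insert i Q. P x} = card {x\<in>Q. P x} + (if P i then 1 else 0)"
proof -
  have "{x\<in>insert i Q. P x} = (if P i then insert i {x\<in>Q. P x} else {x\<in>Q. P x})" by auto
  then show ?thesis using assms by auto
qed

lemma phaseB_step:
  assumes "0 < p" "p < 1" "1 \<le> n" "E \<subseteq> {1..m} \<times> {1..n}" "Q \<subseteq> {1..m}" "i \<in> {1..m}" "i \<notin> Q"
  shows "chain_step p m n (XB m n E Q) (XB m n E (insert i Q))"
proof -
  define ctQ where "ctQ = fst (XB m n E Q)"
  define cbQ where "cbQ = snd (XB m n E Q)"
  define B where "B = insert n (row E i)"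
  have finQ: "finite Q" using assms(5) finite_subset by blast
  have Bsub: "B \<subseteq> {1..n}" using row_sub[OF assms(4)] assms(3) unfolding B_def by auto
  have ctQi: "ctQ i = n - 1" using assms(6,7) unfolding ctQ_def XB_def by simp
  have cbQn: "cbQ n = m" using assms(3) unfolding cbQ_def XB_def by auto
  have add: "add_top i (XB m n E Q) = (ctQ(i := n), cbQ)"
    unfolding add_top_def ctQ_def cbQ_def using ctQi assms(3) unfolding ctQ_def by simp
  have t1: "ssm_topple p m n (ctQ(i := n), cbQ) (ctQ(i := n - card B), \<lambda>j. cbQ j + (if j \<in> B then 1 else 0))"
    by (rule ttop[where S=B]) (use assms Bsub in auto)
  let ?cb1 = "\<lambda>j. cbQ j + (if j \<in> B then 1 else 0)"
  have t2: "ssm_topple p m n (ctQ(i := n - card B), ?cb1) (ctQ(i := n - card B), ?cb1(n := m))"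
    using bounce[OF assms(1,2), where j=n and cb="?cb1" and ct="ctQ(i := n - card B)" and m=m and n=n]
      assms(3) cbQn unfolding B_def by simp
  have eq1: "ctQ(i := n - card B) = fst (XB m n E (insert i Q))"
    unfolding ctQ_def XB_def B_def by (auto simp: fun_eq_iff)
  have eq2: "?cb1(n := m) = snd (XB m n E (insert i Q))"
  proof
    fix j
    show "(?cb1(n := m)) j = snd (XB m n E (insert i Q)) j"
    proof (cases "j \<in> {1..n-1}")
      case True
      hence "j \<noteq> n" by auto
      then show ?thesis using True card_filter_insert[OF finQ assms(7), of "\<lambda>x. j \<in> row E x"]
        unfolding cbQ_def XB_def B_def by simp
    next
      case False
      have "j \<noteq> n \<Longrightarrow> j \<notin> B" using False Bsub unfolding B_def by auto
      then show ?thesis using False unfolding cbQ_def XB_def by auto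
    qed
  qed
  have "(ssm_topple p m n)\<^sup>*\<^sup>* (add_top i (XB m n E Q)) (XB m n E (insert i Q))"
    using t1 t2 eq1 eq2 add by (metis (no_types, lifting) prod.collapse r_into_rtranclp rtranclp.rtrancl_into_rtrancl)
  then show ?thesis unfolding chain_step_def
    using XB_stable assms by (metis insert_subset)
qed

lemma phaseB:
  assumes "0 < p" "p < 1" "1 \<le> n" "E \<subseteq> {1..m} \<times> {1..n}" "Q \<subseteq> {1..m}"
  shows "(chain_step p m n)\<^sup>*\<^sup>* (XB m n E {}) (XB m n E Q)"
proof -
  have "finite Q" using assms(5) finite_subset by blast
  then show ?thesis using assms(5)
  proof (induction Q rule: finite_induct)
    case empty then show ?case by simp
  next
    case (insert i Q)
    have "chain_step p m n (XB m n E Q) (XB m n E (insert i Q))"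
      using phaseB_step[OF assms(1-4)] insert by simp
    moreover have "(chain_step p m n)\<^sup>*\<^sup>* (XB m n E {}) (XB m n E Q)" using insert by simp
    ultimately show ?case by (rule rtranclp.rtrancl_into_rtrancl[rotated])
  qed
qed

definition FE :: "nat \<Rightarrow> nat \<Rightarrow> (nat \<times> nat) set \<Rightarrow> config" where
  "FE m n E = (\<lambda>i. if i \<in> {1..m} then n - card (row E i) else 0,
               \<lambda>j. if j \<in> {1..n} then card (col E j) else 0)"

lemma phaseC:
  assumes "0 < p" "p < 1" "1 \<le> n" "E \<subseteq> {1..m} \<times> {1..n}" "\<forall>i\<in>{1..m}. row E i \<noteq> {}"
  shows "chain_step p m n (XB m n E {1..m}) (FE m n E)"
proof -
  define ct where "ct = fst (XB m n E {1..m})"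
  define cb where "cb = snd (XB m n E {1..m})"
  define T where "T = {i\<in>{1..m}. n \<notin> row E i}"
  have finT: "finite T" unfolding T_def by simp
  have cbn: "cb n = m" using assms(3) unfolding cb_def XB_def by auto
  have add: "add_bot n (XB m n E {1..m}) = (ct, cb(n := m + 1))"
    unfolding add_bot_def ct_def cb_def using cbn unfolding cb_def by simp
  have cS: "card (insert 0 T) = Suc (card T)" using finT unfolding T_def by simp
  have t1: "ssm_topple p m n (ct, cb(n := m + 1))
     (\<lambda>i. ct i + (if i \<in> insert 0 T \<and> i \<noteq> 0 then 1 else 0), cb(n := m + 1 - Suc (card T)))"
    by (rule tbot[where S="insert 0 T"]) (use assms cS in \<open>auto simp: T_def\<close>)
  have eq1: "(\<lambda>i. ct i + (if i \<in> insert 0 T \<and> i \<noteq> 0 then 1 else 0)) = fst (FE m n E)"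
  proof
    fix i
    show "ct i + (if i \<in> insert 0 T \<and> i \<noteq> 0 then 1 else 0) = fst (FE m n E) i"
    proof (cases "i \<in> {1..m}")
      case True
      have fr: "finite (row E i)" using row_sub[OF assms(4)] finite_subset by blast
      show ?thesis
      proof (cases "n \<in> row E i")
        case True
        then show ?thesis using \<open>i \<in> {1..m}\<close> unfolding ct_def XB_def FE_def T_def
          by (simp add: insert_absorb)
      next
        case False
        have "insert n (row E i) \<subseteq> {1..n}" using row_sub[OF assms(4)] assms(3) by auto
        hence "card (insert n (row E i)) \<le> n" by (metis card_atLeastAtMost card_mono diff_Suc_1 finite_atLeastAtMost)
        hence "Suc (card (row E i)) \<le> n" using False fr by simp
        then show ?thesis using \<open>i \<in> {1..m}\<close> False fr unfolding ct_def XB_def FE_def T_def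
          by simp
      qed
    next
      case False
      then show ?thesis unfolding ct_def XB_def FE_def T_def by auto
    qed
  qed
  have eq2: "cb(n := m + 1 - Suc (card T)) = snd (FE m n E)"
  proof
    fix j
    show "(cb(n := m + 1 - Suc (card T))) j = snd (FE m n E) j"
    proof (cases "j = n")
      case True
      have "col E n = {1..m} - T" using assms(4) unfolding col_def T_def row_def by auto
      moreover have "T \<subseteq> {1..m}" unfolding T_def by auto
      ultimately have "card (col E n) = m - card T" using finT by (simp add: card_Diff_subset)
      then show ?thesis using True assms(3) unfolding FE_def by simp
    next
      case False
      show ?thesis
      proof (cases "j \<in> {1..n-1}")
        case True
        have "{i\<in>{1..m}. j \<in> row E i} = col E j" using assms(4) unfolding col_def row_def by auto
        then show ?thesis using True False unfolding cb_def XB_def FE_def by auto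
      next
        case False2: False
        then show ?thesis using False unfolding cb_def XB_def FE_def by auto
      qed
    qed
  qed
  have st: "stable m n (FE m n E)" unfolding stable_def
  proof (intro conjI ballI)
    fix i assume i: "i \<in> {1..m}"
    have "finite (row E i)" using row_sub[OF assms(4)] finite_subset by blast
    hence "card (row E i) > 0" using assms(5) i by (simp add: card_gt_0_iff)
    then show "fst (FE m n E) i < n" using i assms(3) unfolding FE_def by simp
  next
    fix j assume j: "j \<in> {1..n}"
    have "card (col E j) \<le> card {1..m}" using assms(4) unfolding col_def by (intro card_mono) auto
    then show "snd (FE m n E) j < m + 1" using j unfolding FE_def by simp
  qed
  have "(ssm_topple p m n)\<^sup>*\<^sup>* (add_bot n (XB m n E {1..m})) (FE m n E)"
    using t1 eq1 eq2 add by (metis prod.collapse r_into_rtranclp)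
  then show ?thesis unfolding chain_step_def
    using XB_stable[OF assms(3) _ assms(4)] st assms(3) by auto
qed

lemma reach_FE:
  assumes "0 < p" "p < 1" "1 \<le> n" "E \<subseteq> {1..m} \<times> {1..n}" "\<forall>i\<in>{1..m}. row E i \<noteq> {}"
  shows "(chain_step p m n)\<^sup>*\<^sup>* (cmax m n) (FE m n E)"
proof -
  have "(chain_step p m n)\<^sup>*\<^sup>* (cmax m n) (XB m n E {})"
    using phaseA[OF assms(1-3), of "{1..n-1}" m] XA_XB[OF assms(3)] by simp
  also have "(chain_step p m n)\<^sup>*\<^sup>* (XB m n E {}) (XB m n E {1..m})"
    using phaseB[OF assms(1-4)] by simp
  also have "chain_step p m n (XB m n E {1..m}) (FE m n E)"
    using phaseC[OF assms] .
  finally show ?thesis .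
qed

lemma card_filter_sum: "finite A \<Longrightarrow> card {x\<in>A. P x} = (\<Sum>x\<in>A. if P x then 1 else 0)"
  by (simp add: sum.If_cases Int_def)

lemma ksum: "(\<Sum>l=1..s. kcount m c l) = (\<Sum>i=1..m. s - fst c i)"
proof -
  have "(\<Sum>l=1..s. kcount m c l) = (\<Sum>l=1..s. \<Sum>i=1..m. if fst c i < l then 1 else 0)"
    unfolding kcount_def by (rule sum.cong[OF refl], rule card_filter_sum) simp
  also have "\<dots> = (\<Sum>i=1..m. \<Sum>l=1..s. if fst c i < l then 1 else 0)" by (rule sum.swap)
  also have "\<dots> = (\<Sum>i=1..m. s - fst c i)"
  proof (rule sum.cong[OF refl])
    fix i
    have "(\<Sum>l=1..s. if fst c i < l then 1 else 0) = card {l\<in>{1..s}. fst c i < l}"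
      by (rule card_filter_sum[symmetric]) simp
    also have "{l\<in>{1..s}. fst c i < l} = {Suc (fst c i)..s}" by auto
    finally show "(\<Sum>l=1..s. if fst c i < l then 1 else (0::nat)) = s - fst c i" by simp
  qed
  finally show ?thesis .
qed

lemma level_eq:
  assumes "stable m n c"
  shows "level m n c = int (\<Sum>j=1..n. snd c j) - int (\<Sum>l=1..n. kcount m c l)"
proof -
  have le: "\<forall>i\<in>{1..m}. fst c i \<le> n" using assms unfolding stable_def by (simp add: less_imp_le)
  have "int (\<Sum>l=1..n. kcount m c l) = int (\<Sum>i=1..m. n - fst c i)" by (simp only: ksum)
  also have "\<dots> = (\<Sum>i=1..m. int (n - fst c i))" by (rule of_nat_sum)
  also have "\<dots> = (\<Sum>i=1..m. int n - int (fst c i))" using le by (intro sum.cong) auto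
  also have "\<dots> = int (m * n) - int (\<Sum>i=1..m. fst c i)" by (simp add: sum_subtractf)
  finally show ?thesis unfolding level_def by simp
qed

definition SC :: "nat \<Rightarrow> nat \<Rightarrow> config \<Rightarrow> bool" where
  "SC m n c \<longleftrightarrow> (\<forall>J\<subseteq>{1..n}. (\<Sum>i=1..m. card J - fst c i) \<le> sum (snd c) J)"

lemma R_SC:
  "(\<forall>j\<in>{1..n}. sum_list (take j (sorted_bottom n c)) \<ge> (\<Sum>l=1..j. kcount m c l)) \<longleftrightarrow> SC m n c"
proof
  assume R: "\<forall>j\<in>{1..n}. sum_list (take j (sorted_bottom n c)) \<ge> (\<Sum>l=1..j. kcount m c l)"
  show "SC m n c" unfolding SC_def
  proof (intro allI impI)
    fix J assume J: "J \<subseteq> {1..n}"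
    show "(\<Sum>i=1..m. card J - fst c i) \<le> sum (snd c) J"
    proof (cases "J = {}")
      case True then show ?thesis by simp
    next
      case False
      have fin: "finite J" using J by (rule finite_subset) simp
      have "card J \<le> card {1..n}" using J by (intro card_mono) auto
      hence "card J \<le> n" by simp
      moreover have "card J \<ge> 1" using False fin by (simp add: Suc_le_eq card_gt_0_iff)
      ultimately have cJ: "card J \<in> {1..n}" by simp
      have "(\<Sum>i=1..m. card J - fst c i) = (\<Sum>l=1..card J. kcount m c l)"
        by (rule ksum[symmetric])
      also have "\<dots> \<le> sum_list (take (card J) (sorted_bottom n c))"
        using R[rule_format, OF cJ] .
      also have "\<dots> \<le> sum (snd c) J"
      proof -
        have d: "distinct [1..<n+1]" by simp
        have Js: "J \<subseteq> set [1..<n+1]" using J by auto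
        show ?thesis unfolding sorted_bottom_def by (rule prefix_min[OF d Js])
      qed
      finally show ?thesis .
    qed
  qed
next
  assume S: "SC m n c"
  show "\<forall>j\<in>{1..n}. sum_list (take j (sorted_bottom n c)) \<ge> (\<Sum>l=1..j. kcount m c l)"
  proof
    fix j assume j: "j \<in> {1..n}"
    obtain J where J: "J \<subseteq> set [1..<n+1]" "card J = j"
      "sum (snd c) J = sum_list (take j (sort (map (snd c) [1..<n+1])))"
    proof -
      have d: "distinct [1..<n+1]" by simp
      have l: "j \<le> length [1..<n+1]" using j by simp
      show ?thesis using prefix_exists[OF d l, of "snd c"] that by blast
    qed
    have "J \<subseteq> {1..n}" using J(1) by auto
    hence "(\<Sum>i=1..m. card J - fst c i) \<le> sum (snd c) J" using S unfolding SC_def by blast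
    hence "(\<Sum>i=1..m. j - fst c i) \<le> sum (snd c) J" by (simp only: J(2))
    moreover have "sum_list (take j (sorted_bottom n c)) = sum (snd c) J"
      unfolding sorted_bottom_def using J(3) by (simp only:)
    ultimately have "(\<Sum>i=1..m. j - fst c i) \<le> sum_list (take j (sorted_bottom n c))" by simp
    moreover have "(\<Sum>l=1..j. kcount m c l) = (\<Sum>i=1..m. j - fst c i)" by (rule ksum)
    ultimately show "sum_list (take j (sorted_bottom n c)) \<ge> (\<Sum>l=1..j. kcount m c l)" by simp
  qed
qed

lemma OR_SC:
  assumes "OR m n c"
  shows "SC m n c"
  unfolding SC_def
proof (intro allI impI)
  fix J assume J: "J \<subseteq> {1..n}"
  obtain E where E: "orient m n c E" using assms unfolding OR_def by blast
  have box: "E \<subseteq> {1..m} \<times> {1..n}" using E unfolding orient_def by blast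
  have finJ: "finite J" using J by (rule finite_subset) simp
  have per: "card J - fst c i \<le> card {j\<in>J. (i,j)\<in>E}" if i: "i \<in> {1..m}" for i
  proof -
    have r: "n \<le> card {j. (i,j)\<in>E} + fst c i" using E i unfolding orient_def by blast
    have fr: "finite {j. (i,j)\<in>E}" using fin_row[OF box] .
    have rs: "{j. (i,j)\<in>E} \<subseteq> {1..n}" using box by auto
    have "J \<subseteq> {j\<in>J. (i,j)\<in>E} \<union> ({1..n} - {j. (i,j)\<in>E})" using J by auto
    hence "card J \<le> card ({j\<in>J. (i,j)\<in>E} \<union> ({1..n} - {j. (i,j)\<in>E}))"
      using finJ by (intro card_mono) auto
    also have "\<dots> \<le> card {j\<in>J. (i,j)\<in>E} + card ({1..n} - {j. (i,j)\<in>E})"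
      by (rule card_Un_le)
    also have "card ({1..n} - {j. (i,j)\<in>E}) = n - card {j. (i,j)\<in>E}"
      using rs fr by (simp add: card_Diff_subset)
    finally show ?thesis using r by linarith
  qed
  have "(\<Sum>i=1..m. card J - fst c i) \<le> (\<Sum>i=1..m. card {j\<in>J. (i,j)\<in>E})"
    using per by (intro sum_mono) auto
  also have "\<dots> = (\<Sum>i=1..m. \<Sum>j\<in>J. if (i,j)\<in>E then 1 else 0)"
    using finJ by (simp add: card_filter_sum)
  also have "\<dots> = (\<Sum>j\<in>J. \<Sum>i=1..m. if (i,j)\<in>E then 1 else 0)" by (rule sum.swap)
  also have "\<dots> = (\<Sum>j\<in>J. card {i\<in>{1..m}. (i,j)\<in>E})"
    by (rule sum.cong[OF refl], rule card_filter_sum[symmetric]) simp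
  also have "\<dots> \<le> sum (snd c) J"
  proof (rule sum_mono)
    fix j assume "j \<in> J"
    hence "j \<in> {1..n}" using J by auto
    moreover have "{i\<in>{1..m}. (i,j)\<in>E} = {i. (i,j)\<in>E}" using box by auto
    ultimately show "card {i\<in>{1..m}. (i,j)\<in>E} \<le> snd c j" using E unfolding orient_def by simp
  qed
  finally show "(\<Sum>i=1..m. card J - fst c i) \<le> sum (snd c) J" .
qed

lemma SC_E:
  assumes "SC m n c" "stable m n c"
  shows "\<exists>E\<subseteq>{1..m} \<times> {1..n}. (\<forall>i\<in>{1..m}. n - fst c i \<le> card (row E i)) \<and>
            (\<forall>j\<in>{1..n}. card (col E j) \<le> snd c j)"
proof -
  have lt: "\<forall>i\<in>{1..m}. fst c i < n" using assms(2) unfolding stable_def by blast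
  have "\<forall>J\<subseteq>{1..n}. (\<Sum>i\<in>{1..m}. (n - fst c i) + card J - card {1..n}) \<le> sum (snd c) J"
  proof (intro allI impI)
    fix J assume J: "J \<subseteq> {1..n}"
    have "(\<Sum>i\<in>{1..m}. (n - fst c i) + card J - card {1..n}) = (\<Sum>i=1..m. card J - fst c i)"
    proof (rule sum.cong[OF refl])
      fix x assume "x \<in> {1..m}"
      hence "fst c x < n" using lt by blast
      thus "n - fst c x + card J - card {1..n} = card J - fst c x" by simp
    qed
    then show "(\<Sum>i\<in>{1..m}. (n - fst c i) + card J - card {1..n}) \<le> sum (snd c) J"
      using assms(1) J unfolding SC_def by simp
  qed
  from GR[OF _ _ this] obtain E where E: "E \<subseteq> {1..m} \<times> {1..n}"
    "\<forall>i\<in>{1..m}. n - fst c i \<le> card {j. (i, j) \<in> E}" "\<forall>j\<in>{1..n}. card {i. (i, j) \<in> E} \<le> snd c j"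
    by blast
  show ?thesis by (rule exI[of _ E]) (use E in \<open>simp add: row_def col_def\<close>)
qed

lemma stable_chains:
  assumes "(chain_step p m n)\<^sup>*\<^sup>* c d" "stable m n c"
  shows "stable m n d"
  using assms by (induction rule: rtranclp_induct) (auto simp: chain_step_def)

lemma to_cmax:
  assumes "1 \<le> n" "config_wf m n d" "stable m n d"
  shows "(chain_step p m n)\<^sup>*\<^sup>* d (cmax m n)"
proof (rule reach_mono[OF assms(3) cmax_stable[OF assms(1)] assms(2) cmax_wf])
  show "\<forall>i. fst d i \<le> fst (cmax m n) i"
  proof
    fix i show "fst d i \<le> fst (cmax m n) i"
    proof (cases "i \<in> {1..m}")
      case True
      hence "fst d i < n" using assms(3) unfolding stable_def by blast
      then show ?thesis using True unfolding cmax_def by simp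
    next
      case False
      then show ?thesis using assms(2) unfolding config_wf_def by simp
    qed
  qed
  show "\<forall>j. snd d j \<le> snd (cmax m n) j"
  proof
    fix j show "snd d j \<le> snd (cmax m n) j"
    proof (cases "j \<in> {1..n}")
      case True
      hence "snd d j < m + 1" using assms(3) unfolding stable_def by blast
      then show ?thesis using True unfolding cmax_def by simp
    next
      case False
      then show ?thesis using assms(2) unfolding config_wf_def by simp
    qed
  qed
qed

lemma OR_cmax: "OR m n (cmax m n)"
proof -
  have r: "\<And>i. i \<in> {1..m} \<Longrightarrow> {j. (i,j) \<in> {1..m} \<times> {1..n}} = {1..n}" by auto
  have c: "\<And>j. j \<in> {1..n} \<Longrightarrow> {i. (i,j) \<in> {1..m} \<times> {1..n}} = {1..m}" by auto
  have "orient m n (cmax m n) ({1..m} \<times> {1..n})"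
    unfolding orient_def cmax_def using r c by simp
  then show ?thesis unfolding OR_def by blast
qed

theorem theorem2p2:
  fixes m n :: nat and p :: real and c :: config
  assumes "n \<ge> 1" and "0 < p" and "p < 1"
    and "config_wf m n c" and "stable m n c"
  shows "(stoch_recurrent p m n c \<longleftrightarrow>
           (\<forall>j\<in>{1..n}. sum_list (take j (sorted_bottom n c)) \<ge> (\<Sum>l=1..j. kcount m c l)))
       \<and> (stoch_recurrent p m n c \<longrightarrow>
           level m n c = int (\<Sum>j=1..n. snd c j) - int (\<Sum>l=1..n. kcount m c l))"
proof (intro conjI impI)
  show "level m n c = int (\<Sum>j=1..n. snd c j) - int (\<Sum>l=1..n. kcount m c l)"
    by (rule level_eq[OF assms(5)])
next
  have c2max: "(chain_step p m n)\<^sup>*\<^sup>* c (cmax m n)" using to_cmax[OF assms(1,4,5)] .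
  show "stoch_recurrent p m n c \<longleftrightarrow>
           (\<forall>j\<in>{1..n}. sum_list (take j (sorted_bottom n c)) \<ge> (\<Sum>l=1..j. kcount m c l))"
  proof
    assume sr: "stoch_recurrent p m n c"
    hence "(chain_step p m n)\<^sup>*\<^sup>* (cmax m n) c" using c2max unfolding stoch_recurrent_def by blast
    hence "OR m n c" using OR_chains OR_cmax by blast
    hence "SC m n c" by (rule OR_SC)
    then show "\<forall>j\<in>{1..n}. sum_list (take j (sorted_bottom n c)) \<ge> (\<Sum>l=1..j. kcount m c l)"
      using R_SC by blast
  next
    assume "\<forall>j\<in>{1..n}. sum_list (take j (sorted_bottom n c)) \<ge> (\<Sum>l=1..j. kcount m c l)"
    hence sc: "SC m n c" using R_SC by blast
    obtain E where E: "E \<subseteq> {1..m} \<times> {1..n}" "\<forall>i\<in>{1..m}. n - fst c i \<le> card (row E i)"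
      "\<forall>j\<in>{1..n}. card (col E j) \<le> snd c j"
      using SC_E[OF sc assms(5)] by blast
    have lt: "\<forall>i\<in>{1..m}. fst c i < n" using assms(5) unfolding stable_def by blast
    have ne: "\<forall>i\<in>{1..m}. row E i \<noteq> {}"
    proof
      fix i assume i: "i \<in> {1..m}"
      have "1 \<le> card (row E i)" using E(2) lt i by fastforce
      then show "row E i \<noteq> {}" by auto
    qed
    have r1: "(chain_step p m n)\<^sup>*\<^sup>* (cmax m n) (FE m n E)"
      by (rule reach_FE[OF assms(2,3,1) E(1) ne])
    have stF: "stable m n (FE m n E)"
      using phaseC[OF assms(2,3,1) E(1) ne] unfolding chain_step_def by blast
    have wfF: "config_wf m n (FE m n E)" unfolding config_wf_def FE_def by auto
    have r2: "(chain_step p m n)\<^sup>*\<^sup>* (FE m n E) c"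
    proof (rule reach_mono[OF stF assms(5) wfF assms(4)])
      show "\<forall>i. fst (FE m n E) i \<le> fst c i"
      proof
        fix i show "fst (FE m n E) i \<le> fst c i"
          using E(2) unfolding FE_def by (cases "i \<in> {1..m}") force+
      qed
      show "\<forall>j. snd (FE m n E) j \<le> snd c j"
      proof
        fix j show "snd (FE m n E) j \<le> snd c j"
          using E(3) unfolding FE_def by (cases "j \<in> {1..n}") auto
      qed
    qed
    have toc: "(chain_step p m n)\<^sup>*\<^sup>* (cmax m n) c" using r1 r2 by (rule rtranclp_trans)
    show "stoch_recurrent p m n c"
      unfolding stoch_recurrent_def
    proof (intro conjI allI impI)
      show "stable m n c" by (rule assms(5))
      fix d assume cd: "(chain_step p m n)\<^sup>*\<^sup>* c d"
      have "stable m n d" using stable_chains[OF cd assms(5)] .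
      moreover have "config_wf m n d" using wf_chains[OF cd assms(4)] .
      ultimately have "(chain_step p m n)\<^sup>*\<^sup>* d (cmax m n)" using to_cmax[OF assms(1)] by blast
      then show "(chain_step p m n)\<^sup>*\<^sup>* d c" using toc by (rule rtranclp_trans)
    qed
  qed
qed

end
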